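(* Assume $f:\mathbb R^d\to\mathbb R$ is $L$-smooth. For any $(q_0,p_0)\in\mathbb R^d\times\mathbb R^d$ and any step size $\eta>0$ with $\eta^2L\le1$, $$f(\hat q_\eta)-f(q_\eta)\le\frac12\int_0^\eta\int_0^s(G_\tau-G_0)\,d\tau\,ds+\frac34\eta^4L^2\Big(\|p_0\|_2+\frac{1}{\sqrt L}\|\nabla f(q_0)\|_2\Big)^2,$$ where $G_t=\|\nabla f(q_0+tp_0)\|_2^2$.
   Context: $L$-smooth: $f$ differentiable with $\nabla f$ $L$-Lipschitz. Continuous Hamiltonian dynamics from $(q_0,p_0)$: $q_t=q_0+tp_0-\int_0^t\int_0^s\nabla f(q_\tau)\,d\tau\,ds$, $p_t=p_0-\int_0^t\nabla f(q_s)\,ds$ (solution of $\dot q=p$, $\dot p=-\nabla f(q)$). Leapfrog step: $\hat q_\eta=q_0+\eta p_0-\frac{\eta^2}{2}\nabla f(q_0)$, $\hat p_\eta=p_0-\frac\eta2\nabla f(q_0)-\frac\eta2\nabla f(\hat q_\eta)$. *)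

theory Defs
  imports "HOL-Analysis.Analysis"
begin

definition L_smooth :: "(real^'n \<Rightarrow> real) \<Rightarrow> (real^'n \<Rightarrow> real^'n) \<Rightarrow> real \<Rightarrow> bool" where
  "L_smooth f gradf L \<longleftrightarrow>
     (\<forall>x. (f has_derivative (\<lambda>h. gradf x \<bullet> h)) (at x)) \<and>
     (\<forall>x y. norm (gradf x - gradf y) \<le> L * norm (x - y))"

end

theory Submission imports Defs begin

lemma real_cmp1:
  fixes u v u' v' :: "real \<Rightarrow> real"
  assumes T: "T \<in> {0..S}"
    and du: "\<And>t. t \<in> {0..S} \<Longrightarrow> (u has_real_derivative u' t) (at t within {0..S})"
    and dv: "\<And>t. t \<in> {0..S} \<Longrightarrow> (v has_real_derivative v' t) (at t within {0..S})"
    and le: "\<And>t. t \<in> {0..S} \<Longrightarrow> u' t \<le> v' t"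
  shows "u T - u 0 \<le> v T - v 0"
proof -
  have sub: "{0..T} \<subseteq> {0..S}" using T by auto
  have "(u' has_integral (u T - u 0)) {0..T}"
    apply (rule fundamental_theorem_of_calculus)
    using T apply simp
  proof -
    fix x assume x: "x \<in> {0..T}"
    then have xS: "x \<in> {0..S}" using sub by auto
    show "(u has_vector_derivative u' x) (at x within {0..T})"
      using DERIV_subset[OF du[OF xS] sub] by (simp add: has_real_derivative_iff_has_vector_derivative)
  qed
  moreover have "(v' has_integral (v T - v 0)) {0..T}"
    apply (rule fundamental_theorem_of_calculus)
    using T apply simp
  proof -
    fix x assume x: "x \<in> {0..T}"
    then have xS: "x \<in> {0..S}" using sub by auto
    show "(v has_vector_derivative v' x) (at x within {0..T})"
      using DERIV_subset[OF dv[OF xS] sub] by (simp add: has_real_derivative_iff_has_vector_derivative)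
  qed
  ultimately show ?thesis by (rule has_integral_le) (use le sub in auto)
qed

lemma norm_cmp1:
  fixes y y' :: "real \<Rightarrow> 'a::euclidean_space" and v v' :: "real \<Rightarrow> real"
  assumes T: "T \<in> {0..S}"
    and dy: "\<And>t. t \<in> {0..S} \<Longrightarrow> (y has_vector_derivative y' t) (at t within {0..S})"
    and dv: "\<And>t. t \<in> {0..S} \<Longrightarrow> (v has_real_derivative v' t) (at t within {0..S})"
    and le: "\<And>t. t \<in> {0..S} \<Longrightarrow> norm (y' t) \<le> v' t"
  shows "norm (y T - y 0) \<le> v T - v 0"
proof -
  have sub: "{0..T} \<subseteq> {0..S}" using T by auto
  have i1: "(y' has_integral (y T - y 0)) {0..T}"
    apply (rule fundamental_theorem_of_calculus)
    using T apply simp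
  proof -
    fix x assume x: "x \<in> {0..T}"
    then have xS: "x \<in> {0..S}" using sub by auto
    show "(y has_vector_derivative y' x) (at x within {0..T})"
      by (rule has_vector_derivative_within_subset[OF dy[OF xS] sub])
  qed
  have i2: "(v' has_integral (v T - v 0)) {0..T}"
    apply (rule fundamental_theorem_of_calculus)
    using T apply simp
  proof -
    fix x assume x: "x \<in> {0..T}"
    then have xS: "x \<in> {0..S}" using sub by auto
    show "(v has_vector_derivative v' x) (at x within {0..T})"
      using DERIV_subset[OF dv[OF xS] sub] by (simp add: has_real_derivative_iff_has_vector_derivative)
  qed
  have "norm (integral {0..T} y') \<le> integral {0..T} v'"
    by (rule integral_norm_bound_integral) (use i1 i2 le sub in \<open>auto simp: has_integral_integrable\<close>)
  then show ?thesis using i1 i2 by (simp add: integral_unique)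
qed

lemma real_cmp2:
  fixes u u' u'' v v' v'' :: "real \<Rightarrow> real"
  assumes T: "T \<in> {0..S}"
    and du: "\<And>t. t \<in> {0..S} \<Longrightarrow> (u has_real_derivative u' t) (at t within {0..S})"
    and du': "\<And>t. t \<in> {0..S} \<Longrightarrow> (u' has_real_derivative u'' t) (at t within {0..S})"
    and dv: "\<And>t. t \<in> {0..S} \<Longrightarrow> (v has_real_derivative v' t) (at t within {0..S})"
    and dv': "\<And>t. t \<in> {0..S} \<Longrightarrow> (v' has_real_derivative v'' t) (at t within {0..S})"
    and le: "\<And>t. t \<in> {0..S} \<Longrightarrow> u'' t \<le> v'' t"
    and i0: "u 0 \<le> v 0" "u' 0 \<le> v' 0"
  shows "u T \<le> v T"
proof -
  have "\<And>t. t \<in> {0..S} \<Longrightarrow> u' t \<le> v' t"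
    using real_cmp1[OF _ du' dv' le] i0 by fastforce
  then have "u T - u 0 \<le> v T - v 0" using real_cmp1[OF T du dv] by blast
  then show ?thesis using i0 by linarith
qed

lemma norm_cmp2:
  fixes y y' y'' :: "real \<Rightarrow> 'a::euclidean_space"
  assumes T: "T \<in> {0..S}"
    and dy: "\<And>t. t \<in> {0..S} \<Longrightarrow> (y has_vector_derivative y' t) (at t within {0..S})"
    and dy': "\<And>t. t \<in> {0..S} \<Longrightarrow> (y' has_vector_derivative y'' t) (at t within {0..S})"
    and y0: "y 0 = 0" "y' 0 = 0"
    and le: "\<And>t. t \<in> {0..S} \<Longrightarrow> norm (y'' t) \<le> A + B * t"
  shows "norm (y T) \<le> A * T^2 / 2 + B * T^3 / 6"
proof -
  have dv: "((\<lambda>s. A * s + B * s^2/2) has_real_derivative (A + B * t)) (at t within {0..S})" for t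
    by (rule derivative_eq_intros refl | simp)+
  have dw: "((\<lambda>s. A * s^2/2 + B * s^3/6) has_real_derivative (A * t + B * t^2/2)) (at t within {0..S})" for t
    by (rule derivative_eq_intros refl | simp add: field_simps power2_eq_square)+
  have "norm (y' t) \<le> A * t + B * t^2/2" if "t \<in> {0..S}" for t
    using norm_cmp1[OF that dy' dv le] y0 by simp
  then show ?thesis using norm_cmp1[OF T dy dw] y0 by simp
qed

lemma descent:
  fixes f :: "real^'n \<Rightarrow> real" and gradf :: "real^'n \<Rightarrow> real^'n"
  assumes smooth: "L_smooth f gradf L" and L: "L \<ge> 0"
  shows "f y - f x \<le> gradf x \<bullet> (y - x) + L/2 * (norm (y - x))^2"
proof -
  define d where "d = y - x"
  have fd: "\<And>z. (f has_derivative (\<lambda>h. gradf z \<bullet> h)) (at z)"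
    and lip: "\<And>z w. norm (gradf z - gradf w) \<le> L * norm (z - w)"
    using smooth by (auto simp: L_smooth_def)
  define u where "u = (\<lambda>s. f (x + s *\<^sub>R d))"
  have du: "(u has_real_derivative (gradf (x + s *\<^sub>R d) \<bullet> d)) (at s within {0..1})" for s
  proof -
    have l: "((\<lambda>s. x + s *\<^sub>R d) has_derivative (\<lambda>h. h *\<^sub>R d)) (at s within {0..1})"
      by (auto intro!: derivative_eq_intros)
    have "((\<lambda>s. f (x + s *\<^sub>R d)) has_derivative (\<lambda>h. gradf (x + s *\<^sub>R d) \<bullet> (h *\<^sub>R d))) (at s within {0..1})"
      by (rule has_derivative_in_compose[OF l]) (rule has_derivative_at_withinI[OF fd])
    then have "((\<lambda>s. f (x + s *\<^sub>R d)) has_derivative (\<lambda>h. h * (gradf (x + s *\<^sub>R d) \<bullet> d))) (at s within {0..1})"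
      by simp
    moreover have "(\<lambda>h. h * (gradf (x + s *\<^sub>R d) \<bullet> d)) = (*) (gradf (x + s *\<^sub>R d) \<bullet> d)"
      by (rule ext) simp
    ultimately show ?thesis unfolding u_def has_field_derivative_def by simp
  qed
  have dv: "((\<lambda>s. s * (gradf x \<bullet> d) + L * s^2 / 2 * (norm d)^2) has_real_derivative
      (gradf x \<bullet> d + L * s * (norm d)^2)) (at s within {0..1})" for s
    by (rule derivative_eq_intros refl | simp add: field_simps power2_eq_square)+
  have le: "gradf (x + s *\<^sub>R d) \<bullet> d \<le> gradf x \<bullet> d + L * s * (norm d)^2" if "s \<in> {0..1}" for s
  proof -
    have "gradf (x + s *\<^sub>R d) \<bullet> d - gradf x \<bullet> d = (gradf (x + s *\<^sub>R d) - gradf x) \<bullet> d"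
      by (simp add: inner_diff_left)
    also have "\<dots> \<le> norm (gradf (x + s *\<^sub>R d) - gradf x) * norm d"
      by (rule norm_cauchy_schwarz)
    also have "\<dots> \<le> (L * norm (s *\<^sub>R d)) * norm d"
      using lip[of "x + s *\<^sub>R d" x] by (intro mult_right_mono) auto
    also have "\<dots> = L * s * (norm d)^2" using that by (simp add: power2_eq_square)
    finally show ?thesis by simp
  qed
  have "u 1 - u 0 \<le> (1 * (gradf x \<bullet> d) + L * 1^2 / 2 * (norm d)^2) - (0 * (gradf x \<bullet> d) + L * 0^2 / 2 * (norm d)^2)"
    by (rule real_cmp1[OF _ du dv le]) auto
  then show ?thesis by (simp add: u_def d_def)
qed


theorem lemma4:
  fixes f :: "real^'n \<Rightarrow> real" and gradf :: "real^'n \<Rightarrow> real^'n"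
    and L \<eta> :: real and q0 p0 :: "real^'n" and q p :: "real \<Rightarrow> real^'n"
  assumes smooth: "L_smooth f gradf L" and Lpos: "L > 0"
    and eta: "\<eta> > 0" "\<eta>^2 * L \<le> 1"
    and init: "q 0 = q0" "p 0 = p0"
    and dq: "\<And>t. t \<in> {0..\<eta>} \<Longrightarrow> (q has_vector_derivative p t) (at t within {0..\<eta>})"
    and dp: "\<And>t. t \<in> {0..\<eta>} \<Longrightarrow> (p has_vector_derivative - gradf (q t)) (at t within {0..\<eta>})"
  shows "f (q0 + \<eta> *\<^sub>R p0 - (\<eta>^2 / 2) *\<^sub>R gradf q0) - f (q \<eta>)
     \<le> 1/2 * integral {0..\<eta>} (\<lambda>s. integral {0..s}
              (\<lambda>\<tau>. (norm (gradf (q0 + \<tau> *\<^sub>R p0)))^2 - (norm (gradf q0))^2))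
       + 3/4 * \<eta>^4 * L^2 * (norm p0 + 1 / sqrt L * norm (gradf q0))^2"
proof -
  have lip: "\<And>z w. norm (gradf z - gradf w) \<le> L * norm (z - w)"
    using smooth by (auto simp: L_smooth_def)
  define g0 where "g0 = gradf q0"
  define a where "a = norm p0"
  define b where "b = norm g0"
  define sL where "sL = sqrt L"
  define c where "c = a + b / sL"
  have a0: "a \<ge> 0" and b0: "b \<ge> 0" by (auto simp: a_def b_def)
  have sL: "sL > 0" "sL^2 = L" using Lpos by (auto simp: sL_def)
  have c0: "c \<ge> 0" using a0 b0 sL by (simp add: c_def)
  have bc: "b \<le> sL * c" using a0 sL by (simp add: c_def algebra_simps)
  have etasL: "\<eta> * sL \<le> 1"
  proof (rule ccontr)
    assume "\<not> \<eta> * sL \<le> 1"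
    then have "1 < (\<eta> * sL)^2" by (simp add: one_less_power)
    then show False using eta sL by (simp add: power_mult_distrib)
  qed
  have tsL: "t * sL \<le> 1" if "t \<in> {0..\<eta>}" for t
    using that etasL sL by (smt (verit) atLeastAtMost_iff mult_right_mono)
  have Lt2: "L * t^2 \<le> 1" if "t \<in> {0..\<eta>}" for t
  proof -
    have "L * t^2 = (t * sL)^2" using sL by (simp add: power_mult_distrib)
    also have "\<dots> \<le> 1" using tsL[OF that] that sL by (simp add: power_le_one)
    finally show ?thesis .
  qed
  have Lte: "L * t * \<eta> \<le> 1" if "t \<in> {0..\<eta>}" for t
  proof -
    have "L * t * \<eta> \<le> L * \<eta> * \<eta>" using that Lpos eta by (simp add: mult_right_mono)
    also have "\<dots> \<le> 1" using Lt2[of \<eta>] eta by (simp add: power2_eq_square mult.assoc)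
    finally show ?thesis .
  qed
  define y where "y = (\<lambda>t. q t - q0 - t *\<^sub>R p0 + (t^2/2) *\<^sub>R g0)"
  define y' where "y' = (\<lambda>t. p t - p0 + t *\<^sub>R g0)"
  define y'' where "y'' = (\<lambda>t. g0 - gradf (q t))"
  have dy: "(y has_vector_derivative y' t) (at t within {0..\<eta>})" if "t \<in> {0..\<eta>}" for t
    unfolding y_def y'_def
    by (rule derivative_eq_intros dq[OF that] refl | simp)+
  have dy': "(y' has_vector_derivative y'' t) (at t within {0..\<eta>})" if "t \<in> {0..\<eta>}" for t
    unfolding y'_def y''_def
    by (rule derivative_eq_intros dp[OF that] refl | simp)+
  have y0: "y 0 = 0" "y' 0 = 0" using init by (auto simp: y_def y'_def)
  define D where "D = (\<lambda>t. norm (q t - q0))"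
  have Dle: "D t \<le> norm (y t) + t * c" if t: "t \<in> {0..\<eta>}" for t
  proof -
    have "q t - q0 = y t + (t *\<^sub>R p0 - (t^2/2) *\<^sub>R g0)" by (simp add: y_def)
    then have "D t \<le> norm (y t) + norm (t *\<^sub>R p0) + norm ((t^2/2) *\<^sub>R g0)"
      unfolding D_def using norm_triangle_ineq[of "y t" "t *\<^sub>R p0 - (t^2/2) *\<^sub>R g0"]
        norm_triangle_ineq4[of "t *\<^sub>R p0" "(t^2/2) *\<^sub>R g0"] by simp
    also have "\<dots> = norm (y t) + t * a + t^2/2 * b" using t by (simp add: a_def b_def)
    also have "\<dots> \<le> norm (y t) + t * c"
    proof -
      have "t * b * sL \<le> b" using tsL[OF t] b0 by (metis mult.assoc mult.commute mult_left_le)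
      then have "t * b \<le> b / sL" using sL by (simp add: pos_le_divide_eq)
      then have "t * (t * b) \<le> t * (b / sL)" by (rule mult_left_mono) (use t in auto)
      moreover have "t^2/2 * b \<le> t * (t * b)" using t b0 by (simp add: power2_eq_square)
      moreover have "t * c = t * a + t * (b / sL)" by (simp add: c_def algebra_simps)
      ultimately show ?thesis by linarith
    qed
    finally show ?thesis .
  qed
  have y''D: "norm (y'' s) \<le> L * D s" for s
    using lip[of q0 "q s"] by (simp add: y''_def D_def g0_def norm_minus_commute)
  have qcont: "continuous_on {0..\<eta>} q"
    unfolding continuous_on_eq_continuous_within using dq has_vector_derivative_continuous by blast
  have Dcont: "continuous_on {0..\<eta>} D" unfolding D_def by (intro continuous_intros qcont)
  obtain tm where tm: "tm \<in> {0..\<eta>}" "\<And>t. t \<in> {0..\<eta>} \<Longrightarrow> D t \<le> D tm"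
    using continuous_attains_sup[OF compact_Icc _ Dcont] eta by auto
  define M where "M = D tm"
  have M0: "M \<ge> 0" by (simp add: M_def D_def)
  have stepA: "D t \<le> L * M * t^2 / 2 + t * c" if t: "t \<in> {0..\<eta>}" for t
  proof -
    have "norm (y t) \<le> (L * M) * t^2 / 2 + 0 * t^3 / 6"
    proof (rule norm_cmp2[OF t dy dy' y0])
      fix s assume s: "s \<in> {0..\<eta>}"
      have "L * D s \<le> L * M" using tm(2)[OF s] Lpos by (simp add: M_def)
      then show "norm (y'' s) \<le> L * M + 0 * s" using y''D[of s] by simp
    qed
    then show ?thesis using Dle[OF t] by simp
  qed
  have M2: "M \<le> 2 * \<eta> * c"
  proof -
    have "M \<le> L * M * tm^2 / 2 + tm * c" using stepA[OF tm(1)] by (simp add: M_def)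
    also have "\<dots> \<le> M / 2 + \<eta> * c"
    proof -
      have "L * M * tm^2 = M * (L * tm^2)" by simp
      also have "\<dots> \<le> M" by (rule mult_left_le) (use Lt2[OF tm(1)] M0 in auto)
      finally have "L * M * tm^2 / 2 \<le> M / 2" by simp
      moreover have "tm * c \<le> \<eta> * c" using tm(1) c0 by (simp add: mult_right_mono)
      ultimately show ?thesis by simp
    qed
    finally show ?thesis by simp
  qed
  have stepB: "D t \<le> 2 * c * t" if t: "t \<in> {0..\<eta>}" for t
  proof -
    have "M * (L * t^2 / 2) \<le> (2 * \<eta> * c) * (L * t^2 / 2)"
      by (rule mult_right_mono[OF M2]) (use Lpos in simp)
    then have "L * M * t^2 / 2 \<le> L * (2 * \<eta> * c) * t^2 / 2" by (simp add: mult_ac)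
    also have "\<dots> = (L * t * \<eta>) * (c * t)" by (simp add: power2_eq_square)
    also have "\<dots> \<le> c * t" by (rule mult_left_le_one_le) (use Lte[OF t] c0 t Lpos in auto)
    finally have "L * M * t^2 / 2 \<le> c * t" .
    moreover have "t * c = c * t" "2 * c * t = c * t + c * t" by simp_all
    ultimately show ?thesis using stepA[OF t] by linarith
  qed
  have stepC: "D t \<le> 4/3 * c * t" if t: "t \<in> {0..\<eta>}" for t
  proof -
    have "norm (y t) \<le> 0 * t^2 / 2 + (2 * L * c) * t^3 / 6"
    proof (rule norm_cmp2[OF t dy dy' y0])
      fix s assume s: "s \<in> {0..\<eta>}"
      have "L * D s \<le> L * (2 * c * s)" using stepB[OF s] Lpos by simp
      then show "norm (y'' s) \<le> 0 + 2 * L * c * s" using y''D[of s] by (simp add: mult_ac)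
    qed
    also have "\<dots> = (L * t^2) * (c * t) / 3" by (simp add: power2_eq_square power3_eq_cube)
    also have "\<dots> \<le> c * t / 3"
    proof -
      have "(L * t^2) * (c * t) \<le> c * t" by (rule mult_left_le_one_le) (use Lt2[OF t] c0 t Lpos in auto)
      then show ?thesis by simp
    qed
    finally have "norm (y t) \<le> c * t / 3" .
    moreover have "t * c = c * t" "4/3 * c * t = c * t / 3 + c * t" by simp_all
    ultimately show ?thesis using Dle[OF t] by linarith
  qed
  have ybound: "norm (y t) \<le> 2/9 * L * c * t^3" if t: "t \<in> {0..\<eta>}" for t
  proof -
    have "norm (y t) \<le> 0 * t^2 / 2 + (4/3 * L * c) * t^3 / 6"
    proof (rule norm_cmp2[OF t dy dy' y0])
      fix s assume s: "s \<in> {0..\<eta>}"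
      have "L * D s \<le> L * (4/3 * c * s)" using stepC[OF s] Lpos by simp
      then show "norm (y'' s) \<le> 0 + 4/3 * L * c * s" using y''D[of s] by (simp add: mult_ac)
    qed
    then show ?thesis by simp
  qed
  define w where "w = (\<lambda>t. q t - q0 - t *\<^sub>R p0)"
  define w' where "w' = (\<lambda>t. p t - p0)"
  define w'' where "w'' = (\<lambda>t. - gradf (q t))"
  have dw: "(w has_vector_derivative w' t) (at t within {0..\<eta>})" if "t \<in> {0..\<eta>}" for t
    unfolding w_def w'_def
    by (rule derivative_eq_intros dq[OF that] refl | simp)+
  have dw': "(w' has_vector_derivative w'' t) (at t within {0..\<eta>})" if "t \<in> {0..\<eta>}" for t
    unfolding w'_def w''_def
    by (rule derivative_eq_intros dp[OF that] refl | simp)+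
  have w0: "w 0 = 0" "w' 0 = 0" using init by (auto simp: w_def w'_def)
  have wbound: "norm (w t) \<le> b * t^2 / 2 + (4/3 * L * c) * t^3 / 6" if t: "t \<in> {0..\<eta>}" for t
  proof (rule norm_cmp2[OF t dw dw' w0])
    fix s assume s: "s \<in> {0..\<eta>}"
    have "norm (w'' s) = norm (g0 + (gradf (q s) - g0))" by (simp add: w''_def)
    also have "\<dots> \<le> b + norm (gradf (q s) - g0)" unfolding b_def by (rule norm_triangle_ineq)
    also have "\<dots> \<le> b + L * D s" using lip[of "q s" q0] by (simp add: D_def g0_def)
    also have "\<dots> \<le> b + L * (4/3 * c * s)" using stepC[OF s] Lpos by simp
    finally show "norm (w'' s) \<le> b + 4/3 * L * c * s" by simp
  qed
  have contg: "continuous_on UNIV gradf"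
  proof (rule lipschitz_on_continuous_on)
    show "L-lipschitz_on UNIV gradf"
      by (rule lipschitz_onI) (use lip Lpos in \<open>auto simp: dist_norm\<close>)
  qed
  define h where "h = (\<lambda>\<tau>. (norm (gradf (q0 + \<tau> *\<^sub>R p0)))^2 - (norm (gradf q0))^2)"
  have hcont: "continuous_on {0..\<eta>} h"
  proof -
    have "continuous_on {0..\<eta>} (\<lambda>\<tau>. gradf (q0 + \<tau> *\<^sub>R p0))"
      by (rule continuous_on_compose2[OF contg]) (auto intro!: continuous_intros)
    then show ?thesis unfolding h_def by (intro continuous_intros)
  qed
  define I1 where "I1 = (\<lambda>s. integral {0..s} h)"
  define I2 where "I2 = (\<lambda>s. integral {0..s} I1)"
  have dI1: "(I1 has_real_derivative h t) (at t within {0..\<eta>})" if "t \<in> {0..\<eta>}" for t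
    unfolding I1_def has_real_derivative_iff_has_vector_derivative
    by (rule integral_has_vector_derivative[OF hcont that])
  have I1cont: "continuous_on {0..\<eta>} I1"
    unfolding continuous_on_eq_continuous_within
    using dI1 has_vector_derivative_continuous unfolding has_real_derivative_iff_has_vector_derivative by blast
  have dI2: "(I2 has_real_derivative I1 t) (at t within {0..\<eta>})" if "t \<in> {0..\<eta>}" for t
    unfolding I2_def has_real_derivative_iff_has_vector_derivative
    by (rule integral_has_vector_derivative[OF I1cont that])
  define \<phi> where "\<phi> = (\<lambda>t. - (g0 \<bullet> y t))"
  define \<phi>' where "\<phi>' = (\<lambda>t. - (g0 \<bullet> y' t))"
  define \<phi>'' where "\<phi>'' = (\<lambda>t. - (g0 \<bullet> y'' t))"
  have d\<phi>: "(\<phi> has_real_derivative \<phi>' t) (at t within {0..\<eta>})" if "t \<in> {0..\<eta>}" for t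
    unfolding \<phi>_def \<phi>'_def has_real_derivative_iff_has_vector_derivative
    by (intro has_vector_derivative_minus bounded_linear.has_vector_derivative[OF bounded_linear_inner_right] dy that)
  have d\<phi>': "(\<phi>' has_real_derivative \<phi>'' t) (at t within {0..\<eta>})" if "t \<in> {0..\<eta>}" for t
    unfolding \<phi>'_def \<phi>''_def has_real_derivative_iff_has_vector_derivative
    by (intro has_vector_derivative_minus bounded_linear.has_vector_derivative[OF bounded_linear_inner_right] dy' that)
  define \<Psi> where "\<Psi> = (\<lambda>t. 1/2 * I2 t + b * L * (b * t^4 / 24 + 4/3 * L * c * t^5 / 120))"
  define \<Psi>' where "\<Psi>' = (\<lambda>t. 1/2 * I1 t + b * L * (b * t^3 / 6 + 4/3 * L * c * t^4 / 24))"
  define \<Psi>'' where "\<Psi>'' = (\<lambda>t. 1/2 * h t + b * L * (b * t^2 / 2 + 4/3 * L * c * t^3 / 6))"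
  have d\<Psi>: "(\<Psi> has_real_derivative \<Psi>' t) (at t within {0..\<eta>})" if "t \<in> {0..\<eta>}" for t
    unfolding \<Psi>_def \<Psi>'_def
    by (rule derivative_eq_intros dI2[OF that] refl | simp add: field_simps)+
  have d\<Psi>': "(\<Psi>' has_real_derivative \<Psi>'' t) (at t within {0..\<eta>})" if "t \<in> {0..\<eta>}" for t
    unfolding \<Psi>'_def \<Psi>''_def
    by (rule derivative_eq_intros dI1[OF that] refl | simp add: field_simps)+
  have le\<phi>: "\<phi>'' t \<le> \<Psi>'' t" if t: "t \<in> {0..\<eta>}" for t
  proof -
    define x where "x = gradf (q0 + t *\<^sub>R p0)"
    have id: "(norm x)^2 - (norm g0)^2 = 2 * (g0 \<bullet> (x - g0)) + (norm (x - g0))^2"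
      by (simp add: power2_norm_eq_inner inner_diff_left inner_diff_right inner_commute[of x g0])
    have "\<phi>'' t = g0 \<bullet> (x - g0) + g0 \<bullet> (gradf (q t) - x)"
      by (simp add: \<phi>''_def y''_def inner_diff_right)
    also have "g0 \<bullet> (x - g0) \<le> 1/2 * h t"
      using id by (simp add: h_def x_def g0_def)
    also have "g0 \<bullet> (gradf (q t) - x) \<le> b * norm (gradf (q t) - x)"
      unfolding b_def by (rule norm_cauchy_schwarz)
    also have "\<dots> \<le> b * (L * norm (w t))"
      using lip[of "q t" "q0 + t *\<^sub>R p0"] b0 by (intro mult_left_mono) (auto simp: x_def w_def algebra_simps)
    also have "\<dots> \<le> b * (L * (b * t^2 / 2 + (4/3 * L * c) * t^3 / 6))"
      using wbound[OF t] b0 Lpos by (intro mult_left_mono) auto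
    finally show ?thesis by (simp add: \<Psi>''_def algebra_simps)
  qed
  have \<phi>\<Psi>: "\<phi> \<eta> \<le> \<Psi> \<eta>"
    by (rule real_cmp2[OF _ d\<phi> d\<phi>' d\<Psi> d\<Psi>' le\<phi>]) (use eta y0 in \<open>auto simp: \<phi>_def \<phi>'_def \<Psi>_def \<Psi>'_def I1_def I2_def\<close>)
  have etaI: "\<eta> \<in> {0..\<eta>}" using eta by auto
  define E where "E = - y \<eta>"
  have Eeq: "(q0 + \<eta> *\<^sub>R p0 - (\<eta>^2 / 2) *\<^sub>R gradf q0) - q \<eta> = E"
    by (simp add: E_def y_def g0_def algebra_simps)
  define X where "X = L^2 * c^2 * \<eta>^4"
  have X0: "X \<ge> 0" by (simp add: X_def)
  have nE: "norm E \<le> 2/9 * L * c * \<eta>^3" using ybound[OF etaI] by (simp add: E_def)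
  have nE0: "0 \<le> 2/9 * L * c * \<eta>^3" using Lpos c0 eta by simp
  have desc: "f (q0 + \<eta> *\<^sub>R p0 - (\<eta>^2 / 2) *\<^sub>R gradf q0) - f (q \<eta>) \<le> gradf (q \<eta>) \<bullet> E + L/2 * (norm E)^2"
    using descent[OF smooth less_imp_le[OF Lpos], of "q0 + \<eta> *\<^sub>R p0 - (\<eta>^2 / 2) *\<^sub>R gradf q0" "q \<eta>"]
    unfolding Eeq .
  have split: "gradf (q \<eta>) \<bullet> E = \<phi> \<eta> + (gradf (q \<eta>) - g0) \<bullet> E"
    by (simp add: \<phi>_def E_def inner_diff_left)
  have T3: "(gradf (q \<eta>) - g0) \<bullet> E \<le> 8/27 * X"
  proof -
    have "(gradf (q \<eta>) - g0) \<bullet> E \<le> norm (gradf (q \<eta>) - g0) * norm E" by (rule norm_cauchy_schwarz)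
    also have "\<dots> \<le> (L * (4/3 * c * \<eta>)) * (2/9 * L * c * \<eta>^3)"
    proof (rule mult_mono)
      show "norm (gradf (q \<eta>) - g0) \<le> L * (4/3 * c * \<eta>)"
        using lip[of "q \<eta>" q0] stepC[OF etaI] Lpos unfolding g0_def D_def
        by (smt (verit, ccfv_SIG) mult_left_mono)
    qed (use nE Lpos c0 eta in auto)
    also have "\<dots> = 8/27 * X" by (simp add: X_def power2_eq_square power3_eq_cube power4_eq_xxxx)
    finally show ?thesis .
  qed
  have T4: "L/2 * (norm E)^2 \<le> 2/81 * X"
  proof -
    have "(norm E)^2 \<le> (2/9 * L * c * \<eta>^3)^2" using nE by (simp add: power_mono)
    then have "L/2 * (norm E)^2 \<le> L/2 * (2/9 * L * c * \<eta>^3)^2" using Lpos by (simp add: mult_left_mono)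
    also have "\<dots> = 2/81 * X * (L * \<eta>^2)"
      by (simp add: X_def power2_eq_square power3_eq_cube power4_eq_xxxx)
    also have "\<dots> \<le> 2/81 * X" by (rule mult_left_le) (use Lt2[OF etaI] X0 in auto)
    finally show ?thesis .
  qed
  have T1: "b * L * (b * \<eta>^4 / 24) \<le> 1/24 * X"
  proof -
    have "b^2 \<le> (sL * c)^2" using bc b0 by (simp add: power_mono)
    then have "b^2 \<le> L * c^2" using sL by (simp add: power_mult_distrib)
    then have "b^2 * (L * \<eta>^4) \<le> (L * c^2) * (L * \<eta>^4)" using Lpos by (simp add: mult_right_mono)
    then show ?thesis by (simp add: X_def power2_eq_square algebra_simps)
  qed
  have T2: "b * L * (4/3 * L * c * \<eta>^5 / 120) \<le> 1/90 * X"
  proof -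
    have "b * \<eta> \<le> sL * c * \<eta>" using bc eta by (simp add: mult_right_mono)
    also have "\<dots> = (\<eta> * sL) * c" by simp
    also have "\<dots> \<le> c" by (rule mult_left_le_one_le) (use etasL c0 eta sL in auto)
    finally have "b * \<eta> \<le> c" .
    then have "(b * \<eta>) * (L^2 * c * \<eta>^4) \<le> c * (L^2 * c * \<eta>^4)"
      using Lpos c0 eta by (simp add: mult_right_mono)
    moreover have e5: "\<eta>^5 = \<eta> * \<eta>^4" by (simp add: eval_nat_numeral)
    ultimately show ?thesis by (simp add: X_def power2_eq_square algebra_simps)
  qed
  have cc: "norm p0 + 1 / sqrt L * norm (gradf q0) = c" by (simp add: c_def a_def b_def g0_def sL_def)
  have "f (q0 + \<eta> *\<^sub>R p0 - (\<eta>^2 / 2) *\<^sub>R gradf q0) - f (q \<eta>)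
      \<le> \<Psi> \<eta> + 8/27 * X + 2/81 * X" using desc split T3 T4 \<phi>\<Psi> by linarith
  also have "\<dots> \<le> 1/2 * I2 \<eta> + 3/4 * X"
  proof -
    have "\<Psi> \<eta> = 1/2 * I2 \<eta> + b * L * (b * \<eta>^4 / 24) + b * L * (4/3 * L * c * \<eta>^5 / 120)"
      by (simp add: \<Psi>_def distrib_left)
    then show ?thesis using T1 T2 X0 by linarith
  qed
  finally show ?thesis unfolding cc by (simp add: I2_def I1_def h_def X_def g0_def mult.commute mult.left_commute)
qed

end
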